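(* For any fixed $\theta\in\mathbb R$, the function $t\mapsto G_\theta(t)$ is $C^\infty$ and strictly positive on $(0,1]$, and as $t\downarrow0$, $$G_\theta(t)=\frac{1}{t(\log\frac1t)^2}\Big\{1+\frac{2\theta}{\log\frac1t}+O\Big(\frac{1}{(\log\frac1t)^2}\Big)\Big\}.$$
   Context: For $\theta\in\mathbb R$ and $t\in(0,1]$, $G_\theta(t):=\int_0^\infty\frac{e^{(\theta-\gamma)s}\,s\,t^{s-1}}{\Gamma(s+1)}\,\mathrm ds$, where $\gamma$ is the Euler–Mascheroni constant; equivalently $G_\theta(t)=\int_0^\infty e^{\theta s}f_s(t)\mathrm ds$ with $f_s$ the density of $Y_s$ for the Dickman subordinator $Y$ (pure-jump subordinator with Lévy measure $\frac1t\mathbf 1_{(0,1)}(t)\mathrm dt$). *)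

theory Defs
  imports "HOL-Analysis.Analysis" "HOL-Library.Landau_Symbols"
begin

definition G :: "real \<Rightarrow> real \<Rightarrow> real" where
  "G \<theta> t = (LINT s:{0<..}|lborel.
      exp ((\<theta> - euler_mascheroni) * s) * s * t powr (s - 1) / Gamma (s + 1))"

definition C_infinity_on :: "(real \<Rightarrow> real) \<Rightarrow> real set \<Rightarrow> bool" where
  "C_infinity_on f S \<longleftrightarrow>
     (\<exists>D :: nat \<Rightarrow> real \<Rightarrow> real. (\<forall>x\<in>S. D 0 x = f x) \<and>
        (\<forall>n. \<forall>x\<in>S. (D n has_real_derivative D (Suc n) x) (at x within S)))"

end

theory Submission
  imports Defs "HOL-Probability.Distributions"
begin


lemma laplace_nn:
  fixes l :: real assumes l: "0 < l"
  shows "(\<integral>\<^sup>+x. ennreal (x^i * exp (-(l*x))) * indicator {0..} x \<partial>lborel) = ennreal (fact i / l^(Suc i))"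
proof -
  have eq: "\<And>x. indicator {0..} (x / l) = indicator {0..} x"
    using l by (simp add: field_simps split: split_indicator)
  have "(\<integral>\<^sup>+x. ennreal (x^i * exp (-(l*x))) * indicator {0..} x \<partial>lborel) =
    (\<integral>\<^sup>+x. (1/l^i) * (ennreal ((l*x)^i * exp (- (l*x))) * indicator {0 ..} x) \<partial>lborel)"
    using l by (intro nn_integral_cong)
       (auto simp: power_mult_distrib ennreal_mult'[symmetric] split: split_indicator)
  also have "\<dots> = (1/l^i) * (\<integral>\<^sup>+x. ennreal ((l*x)^i * exp (- (l*x))) * indicator {0 ..} x \<partial>lborel)"
    by (intro nn_integral_cmult) auto
  also have "\<dots> = ennreal (1/l^i) * ((1/l) * (\<integral>\<^sup>+x. ennreal (x^i * exp (- x)) * indicator {0 ..} x \<partial>lborel))"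
    using l by (subst nn_integral_real_affine[where c="1 / l" and t=0]) (auto simp: field_simps eq)
  also have "\<dots> = ennreal (fact i / l^(Suc i))"
    using l by (subst nn_intergal_power_times_exp_Ici) (auto simp: ennreal_mult'[symmetric] field_simps)
  finally show ?thesis .
qed


lemma laplace_int:
  fixes l :: real assumes l: "0 < l"
  shows "has_bochner_integral lborel (\<lambda>x. indicator {0<..} x *\<^sub>R (x^i * exp (-(l*x)))) (fact i / l^(Suc i))"
proof (rule has_bochner_integral_nn_integral)
  show "(\<lambda>x. indicator {0<..} x *\<^sub>R (x^i * exp (-(l*x)))) \<in> borel_measurable lborel" by measurable
  show "AE x in lborel. 0 \<le> indicator {0<..} x *\<^sub>R (x^i * exp (-(l*x)))"
    by (auto split: split_indicator)
  show "0 \<le> fact i / l^(Suc i)" using l by simp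
  have "(\<integral>\<^sup>+x. ennreal (indicator {0<..} x *\<^sub>R (x^i * exp (-(l*x)))) \<partial>lborel)
      = (\<integral>\<^sup>+x. ennreal (x^i * exp (-(l*x))) * indicator {0..} x \<partial>lborel)"
    apply (rule nn_integral_cong_AE)
    using AE_lborel_singleton[of 0] by eventually_elim (auto split: split_indicator)
  then show "(\<integral>\<^sup>+x. ennreal (indicator {0<..} x *\<^sub>R (x^i * exp (-(l*x)))) \<partial>lborel) = ennreal (fact i / l^(Suc i))"
    using laplace_nn[OF l] by simp
qed

lemma laplace_set:
  fixes l :: real assumes l: "0 < l"
  shows "set_integrable lborel {0<..} (\<lambda>x. x^i * exp (-(l*x)))"
    "(LINT x:{0<..}|lborel. x^i * exp (-(l*x))) = fact i / l^(Suc i)"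
  using laplace_int[OF l, of i] unfolding set_integrable_def set_lebesgue_integral_def
  by (auto simp: has_bochner_integral_iff)



lemma Gamma_lower:
  fixes s M :: real assumes s: "0 \<le> s" and M: "0 < M"
  shows "M powr s * exp (-(M+1)) \<le> Gamma (s+1)"
proof -
  have "ennreal (M powr s * exp (-(M+1))) = (\<integral>\<^sup>+x. ennreal (M powr s * exp (-(M+1))) * indicator {M..M+1} x \<partial>lborel)"
    by (subst nn_integral_cmult_indicator) auto
  also have "\<dots> \<le> (\<integral>\<^sup>+t. ennreal (indicator {0..} t * t powr (s + 1 - 1) / exp t) \<partial>lborel)"
  proof (rule nn_integral_mono)
    fix t :: real
    show "ennreal (M powr s * exp (-(M+1))) * indicator {M..M+1} t \<le> ennreal (indicator {0..} t * t powr (s + 1 - 1) / exp t)"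
    proof (cases "t \<in> {M..M+1}")
      case True
      then have t: "M \<le> t" "t \<le> M + 1" by auto
      have "M powr s \<le> t powr s" using t M s by (intro powr_mono2) auto
      moreover have "exp (-(M+1)) \<le> exp (-t)" using t by simp
      then have "exp (-(M+1)) \<le> 1 / exp t" by (simp add: exp_minus inverse_eq_divide)
      ultimately have "M powr s * exp (-(M+1)) \<le> t powr s * (1 / exp t)"
        by (intro mult_mono) auto
      then show ?thesis using True M t by (auto simp: ennreal_leI)
    qed auto
  qed
  also have "\<dots> = ennreal (Gamma (s+1))"
    using Gamma_conv_nn_integral_real[of "s+1"] s by simp
  finally show ?thesis by (subst (asm) ennreal_le_iff) (use s M in auto)
qed

lemma rGamma_upper:
  fixes s M :: real assumes s: "0 \<le> s" and M: "0 < M"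
  shows "rGamma (s+1) \<le> exp (M+1) * exp (- s * ln M)"
proof -
  have g: "0 < Gamma (s+1)" using s by simp
  have "M powr s * exp (-(M+1)) \<le> Gamma (s+1)" by (rule Gamma_lower[OF s M])
  then have "1 / Gamma (s+1) \<le> 1 / (M powr s * exp (-(M+1)))"
    using M g by (intro divide_left_mono mult_pos_pos) auto
  also have "1 / (M powr s * exp (-(M+1))) = exp (M+1) * exp (- s * ln M)"
    using M by (simp add: powr_def exp_minus field_simps exp_add[symmetric])
  finally show ?thesis by (simp add: rGamma_inverse_Gamma inverse_eq_divide)
qed



lemma rGamma_pos: "0 \<le> s \<Longrightarrow> 0 < rGamma (s+1::real)"
  by (simp add: rGamma_inverse_Gamma)

lemma integrable_W:
  fixes f :: "real \<Rightarrow> real"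
  assumes cont: "continuous_on {0<..} f"
    and bnd: "\<And>s. 0 < s \<Longrightarrow> \<bar>f s\<bar> \<le> C * exp (B * s) * rGamma (s+1)"
  shows "set_integrable lborel {0<..} f"
proof (rule set_integrable_bound[where f="\<lambda>s. (\<bar>C\<bar> * exp (exp (B+1) + 1)) * (s^0 * exp (-(1 * s)))"])
  show "set_integrable lborel {0<..} (\<lambda>s. (\<bar>C\<bar> * exp (exp (B+1) + 1)) * (s^0 * exp (-(1 * s))))"
    using laplace_set(1)[of 1 0] by (intro set_integrable_mult_right) auto
  show "set_borel_measurable lborel {0<..} f"
    unfolding set_borel_measurable_def
    using borel_measurable_continuous_on_indicator[OF _ cont] by simp
  show "AE x in lborel. x \<in> {0<..} \<longrightarrow> norm (f x) \<le> norm (\<bar>C\<bar> * exp (exp (B+1) + 1) * (x^0 * exp (-(1 * x))))"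
  proof (intro AE_I2 impI)
    fix s :: real assume "s \<in> {0<..}"
    then have s: "0 < s" by simp
    have r: "rGamma (s+1) \<le> exp (exp (B+1) + 1) * exp (- s * ln (exp (B+1)))"
      using rGamma_upper[of s "exp (B+1)"] s by simp
    have "\<bar>f s\<bar> \<le> C * exp (B * s) * rGamma (s+1)" by (rule bnd[OF s])
    also have "\<dots> \<le> \<bar>C\<bar> * exp (B * s) * rGamma (s+1)"
      using rGamma_pos[of s] s by (intro mult_right_mono) auto
    also have "\<dots> \<le> \<bar>C\<bar> * exp (B * s) * (exp (exp (B+1) + 1) * exp (- s * ln (exp (B+1))))"
      by (intro mult_left_mono r) auto
    also have "\<dots> = \<bar>C\<bar> * exp (exp (B+1) + 1) * (exp (B * s) * exp (- s * (B+1)))" by simp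
    also have "exp (B * s) * exp (- s * (B+1)) = exp (-s)" by (simp add: exp_add[symmetric] algebra_simps)
    finally show "norm (f s) \<le> norm (\<bar>C\<bar> * exp (exp (B+1) + 1) * (s^0 * exp (-(1 * s))))" by simp
  qed
qed



lemma deriv_integral:
  fixes F F' :: "real \<Rightarrow> real \<Rightarrow> real" and w :: "real \<Rightarrow> real"
  assumes ab: "a < x" "x < b"
    and int: "\<And>t. a < t \<Longrightarrow> t < b \<Longrightarrow> integrable lborel (F t)"
    and meas: "F' x \<in> borel_measurable lborel"
    and der: "\<And>t s. a < t \<Longrightarrow> t < b \<Longrightarrow> ((\<lambda>t. F t s) has_real_derivative F' t s) (at t)"
    and bnd: "\<And>t s. a < t \<Longrightarrow> t < b \<Longrightarrow> \<bar>F' t s\<bar> \<le> w s"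
    and w: "integrable lborel w"
  shows "((\<lambda>t. integral\<^sup>L lborel (F t)) has_real_derivative integral\<^sup>L lborel (F' x)) (at x)"
  unfolding has_field_derivative_iff tendsto_at_iff_sequentially
proof (intro allI impI)
  fix X :: "nat \<Rightarrow> real"
  assume Xne: "\<forall>i. X i \<in> UNIV - {x}" and X: "X \<longlonglongrightarrow> x"
  have "eventually (\<lambda>n. a < X n) sequentially" using order_tendstoD(1)[OF X ab(1)] .
  moreover have "eventually (\<lambda>n. X n < b) sequentially" using order_tendstoD(2)[OF X ab(2)] .
  ultimately have "eventually (\<lambda>n. a < X n \<and> X n < b) sequentially" by eventually_elim auto
  then obtain N where N: "\<And>n. n \<ge> N \<Longrightarrow> a < X n \<and> X n < b" by (auto simp: eventually_sequentially)
  define Y where "Y n = X (n + N)" for n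
  have Yab: "a < Y n" "Y n < b" for n using N[of "n+N"] by (auto simp: Y_def)
  have Yne: "Y n \<noteq> x" for n using Xne by (auto simp: Y_def)
  have Y: "Y \<longlonglongrightarrow> x" unfolding Y_def by (rule LIMSEQ_ignore_initial_segment[OF X])
  define S where "S n s = (F (Y n) s - F x s) / (Y n - x)" for n s
  have intx: "integrable lborel (F x)" using int ab by auto
  have intY: "integrable lborel (F (Y n))" for n using int Yab by auto
  have lim: "(\<lambda>n. integral\<^sup>L lborel (S n)) \<longlonglongrightarrow> integral\<^sup>L lborel (F' x)"
  proof (rule integral_dominated_convergence[where w=w])
    show "F' x \<in> borel_measurable lborel" by fact
    show "S n \<in> borel_measurable lborel" for n
      unfolding S_def using intx intY[of n]
      by (intro borel_measurable_divide borel_measurable_diff borel_measurable_integrable) auto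
    show "integrable lborel w" by fact
    show "AE s in lborel. (\<lambda>n. S n s) \<longlonglongrightarrow> F' x s"
    proof (intro AE_I2)
      fix s
      have "((\<lambda>t. (F t s - F x s) / (t - x)) \<longlongrightarrow> F' x s) (at x)"
        using der[OF ab, of s] unfolding has_field_derivative_iff .
      then show "(\<lambda>n. S n s) \<longlonglongrightarrow> F' x s"
        unfolding tendsto_at_iff_sequentially S_def comp_def using Yne Y by auto
    qed
    show "AE s in lborel. norm (S n s) \<le> w s" for n
    proof (intro AE_I2)
      fix s
      have "norm ((\<lambda>t. F t s) (Y n) - (\<lambda>t. F t s) x) \<le> w s * norm (Y n - x)"
      proof (rule field_differentiable_bound[where S="{a<..<b}" and f'="\<lambda>t. F' t s"])
        show "convex {a<..<b}" by simp
        show "((\<lambda>t. F t s) has_field_derivative F' t s) (at t within {a<..<b})" if "t \<in> {a<..<b}" for t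
          using der[of t s] that by (auto intro: has_field_derivative_at_within)
        show "norm (F' t s) \<le> w s" if "t \<in> {a<..<b}" for t using bnd[of t s] that by auto
      qed (use Yab ab in auto)
      then show "norm (S n s) \<le> w s"
        using Yne[of n] by (simp add: S_def divide_le_eq abs_divide)
    qed
  qed
  have "integral\<^sup>L lborel (S n) = (integral\<^sup>L lborel (F (Y n)) - integral\<^sup>L lborel (F x)) / (Y n - x)" for n
    unfolding S_def using intx intY[of n] by simp
  with lim have "(\<lambda>n. (integral\<^sup>L lborel (F (X (n + N))) - integral\<^sup>L lborel (F x)) / (X (n+N) - x)) \<longlonglongrightarrow> integral\<^sup>L lborel (F' x)"
    by (simp add: Y_def)
  then show "((\<lambda>t. (integral\<^sup>L lborel (F t) - integral\<^sup>L lborel (F x)) / (t - x)) \<circ> X) \<longlonglongrightarrow> integral\<^sup>L lborel (F' x)"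
    unfolding comp_def by (rule LIMSEQ_offset)
qed



definition pf :: "nat \<Rightarrow> real \<Rightarrow> real" where "pf n s = (\<Prod>i<n. s - 1 - real i)"
definition kk :: "real \<Rightarrow> real \<Rightarrow> real" where
  "kk \<theta> s = exp ((\<theta> - euler_mascheroni) * s) * s * rGamma (s+1)"
definition DD :: "real \<Rightarrow> nat \<Rightarrow> real \<Rightarrow> real" where
  "DD \<theta> n t = (LINT s:{0<..}|lborel. kk \<theta> s * pf n s * t powr (s - 1 - real n))"

lemma pf_Suc: "pf (Suc n) s = pf n s * (s - 1 - real n)"
  by (simp add: pf_def)

lemma pf_bound: "0 \<le> s \<Longrightarrow> \<bar>pf n s\<bar> \<le> fact n * exp (real n * s)"
proof (induction n)
  case 0 then show ?case by (simp add: pf_def)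
next
  case (Suc n)
  have "0 \<le> s * real n" using Suc.prems by simp
  then have "\<bar>s - 1 - real n\<bar> \<le> (1 + real n) * (1 + s)" using Suc.prems by (simp add: algebra_simps abs_le_iff)
  also have "\<dots> \<le> (1 + real n) * exp s" using exp_ge_add_one_self[of s] by (intro mult_left_mono) (auto simp: add.commute)
  finally have 1: "\<bar>s - 1 - real n\<bar> \<le> (1 + real n) * exp s" .
  have "\<bar>pf (Suc n) s\<bar> = \<bar>pf n s\<bar> * \<bar>s - 1 - real n\<bar>" by (simp add: pf_Suc abs_mult)
  also have "\<dots> \<le> (fact n * exp (real n * s)) * ((1 + real n) * exp s)"
    using Suc by (intro mult_mono 1) auto
  also have "\<dots> = fact (Suc n) * exp (real (Suc n) * s)"
    by (simp add: exp_add[symmetric] algebra_simps)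
  finally show ?case .
qed

lemma kk_bound: "0 < s \<Longrightarrow> \<bar>kk \<theta> s\<bar> \<le> exp ((\<theta> - euler_mascheroni + 1) * s) * rGamma (s+1)"
proof -
  assume s: "0 < s"
  have r: "0 < rGamma (s+1)" using rGamma_pos[of s] s by simp
  have se: "s \<le> exp s" using exp_ge_add_one_self[of s] by linarith
  have "\<bar>kk \<theta> s\<bar> = exp ((\<theta> - euler_mascheroni) * s) * s * rGamma (s+1)"
    using s r by (simp add: kk_def abs_mult)
  also have "\<dots> \<le> exp ((\<theta> - euler_mascheroni) * s) * exp s * rGamma (s+1)"
    using r s se by (intro mult_right_mono mult_left_mono) auto
  also have "\<dots> = exp ((\<theta> - euler_mascheroni + 1) * s) * rGamma (s+1)"
    by (simp add: exp_add[symmetric] algebra_simps)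
  finally show ?thesis .
qed

lemma integrand_bound:
  assumes a: "0 < a" "a \<le> t" "t \<le> b" and s: "0 < s"
  shows "\<bar>kk \<theta> s * pf n s * t powr (s - 1 - real n)\<bar>
     \<le> (fact n * a powr (-1 - real n)) * exp ((\<theta> - euler_mascheroni + 1 + real n + ln b) * s) * rGamma (s+1)"
proof -
  have t: "0 < t" using a by simp
  have b: "0 < b" using a by simp
  have "s - 1 - real n = s + (-1 - real n)" by simp
  then have "t powr (s - 1 - real n) = t powr s * t powr (-1 - real n)" by (simp only: powr_add)
  also have "\<dots> \<le> b powr s * a powr (-1 - real n)"
    using a s t by (intro mult_mono powr_mono2 powr_mono2') auto
  also have "b powr s = exp ((ln b) * s)" using b by (simp add: powr_def mult.commute)
  finally have tp: "t powr (s - 1 - real n) \<le> exp (ln b * s) * a powr (-1 - real n)" .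
  have "\<bar>kk \<theta> s * pf n s * t powr (s - 1 - real n)\<bar> = \<bar>kk \<theta> s\<bar> * \<bar>pf n s\<bar> * t powr (s - 1 - real n)"
    by (simp add: abs_mult)
  also have "\<dots> \<le> (exp ((\<theta> - euler_mascheroni + 1) * s) * rGamma (s+1)) * (fact n * exp (real n * s)) * (exp (ln b * s) * a powr (-1 - real n))"
    using kk_bound[OF s, of \<theta>] pf_bound[of s n] s tp
    by (intro mult_mono) (auto intro!: mult_nonneg_nonneg simp: rGamma_pos less_imp_le)
  also have "\<dots> = (fact n * a powr (-1 - real n)) * exp ((\<theta> - euler_mascheroni + 1 + real n + ln b) * s) * rGamma (s+1)"
    by (simp add: exp_add[symmetric] algebra_simps)
  finally show ?thesis .
qed

lemma cont_integrand: "0 < t \<Longrightarrow> continuous_on {0<..} (\<lambda>s. kk \<theta> s * pf n s * t powr (s - 1 - real n))"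
  unfolding kk_def pf_def
  by (intro continuous_intros continuous_at_imp_continuous_on ballI isCont_rGamma) auto

lemma DD_integrable:
  assumes t: "0 < t"
  shows "set_integrable lborel {0<..} (\<lambda>s. kk \<theta> s * pf n s * t powr (s - 1 - real n))"
  by (rule integrable_W[OF cont_integrand[OF t] integrand_bound[of t t t]]) (use t in auto)

lemma DD_deriv:
  assumes x: "0 < x"
  shows "(DD \<theta> n has_real_derivative DD \<theta> (Suc n) x) (at x)"
proof -
  define C where "C = fact n * (x/2) powr (-1 - real n)"
  define B where "B = \<theta> - euler_mascheroni + 1 + real n + ln (2*x)"
  define C' where "C' = fact (Suc n) * (x/2) powr (-1 - real (Suc n))"
  define B' where "B' = \<theta> - euler_mascheroni + 1 + real (Suc n) + ln (2*x)"
  have wint: "set_integrable lborel {0<..} (\<lambda>s. C' * exp (B' * s) * rGamma (s+1))"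
    by (rule integrable_W[where C=C' and B=B'])
       (auto intro!: continuous_intros continuous_at_imp_continuous_on isCont_rGamma simp: rGamma_pos less_imp_le C'_def)
  have "((\<lambda>t. integral\<^sup>L lborel (\<lambda>s. indicator {0<..} s *\<^sub>R (kk \<theta> s * pf n s * t powr (s - 1 - real n))))
     has_real_derivative integral\<^sup>L lborel (\<lambda>s. indicator {0<..} s *\<^sub>R (kk \<theta> s * pf (Suc n) s * x powr (s - 1 - real (Suc n))))) (at x)"
  proof (rule deriv_integral[where a="x/2" and b="2*x" and w="\<lambda>s. indicator {0<..} s *\<^sub>R (C' * exp (B' * s) * rGamma (s+1))"])
    show "x/2 < x" "x < 2*x" using x by auto
    show "integrable lborel (\<lambda>s. indicator {0<..} s *\<^sub>R (kk \<theta> s * pf n s * t powr (s - 1 - real n)))"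
      if "x/2 < t" "t < 2*x" for t
      using DD_integrable[of t \<theta> n] that x unfolding set_integrable_def by auto
    show "(\<lambda>s. indicator {0<..} s *\<^sub>R (kk \<theta> s * pf (Suc n) s * x powr (s - 1 - real (Suc n)))) \<in> borel_measurable lborel"
      using DD_integrable[OF x, of \<theta> "Suc n"] unfolding set_integrable_def by (rule borel_measurable_integrable)
    show "integrable lborel (\<lambda>s. indicator {0<..} s *\<^sub>R (C' * exp (B' * s) * rGamma (s+1)))"
      using wint unfolding set_integrable_def .
    show "((\<lambda>t. indicator {0<..} s *\<^sub>R (kk \<theta> s * pf n s * t powr (s - 1 - real n)))
       has_real_derivative indicator {0<..} s *\<^sub>R (kk \<theta> s * pf (Suc n) s * t powr (s - 1 - real (Suc n)))) (at t)"
      if "x/2 < t" "t < 2*x" for t s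
    proof -
      have t: "0 < t" using that x by auto
      have d1: "((\<lambda>t. kk \<theta> s * pf n s * t powr (s - 1 - real n)) has_real_derivative
          kk \<theta> s * pf n s * ((s - 1 - real n) * t powr (s - 1 - real n - 1))) (at t)"
        by (rule DERIV_cmult has_real_derivative_powr t)+
      have e: "kk \<theta> s * pf n s * ((s - 1 - real n) * t powr (s - 1 - real n - 1))
          = kk \<theta> s * pf (Suc n) s * t powr (s - 1 - real (Suc n))"
        by (simp add: pf_Suc algebra_simps)
      show ?thesis unfolding real_scaleR_def using DERIV_cmult[OF d1[unfolded e], of "indicator {0<..} s"] .
    qed
    show "\<bar>indicator {0<..} s *\<^sub>R (kk \<theta> s * pf (Suc n) s * t powr (s - 1 - real (Suc n)))\<bar>
       \<le> indicator {0<..} s *\<^sub>R (C' * exp (B' * s) * rGamma (s+1))"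
      if "x/2 < t" "t < 2*x" for t s
      using integrand_bound[of "x/2" t "2*x" s \<theta> "Suc n"] that x
      by (auto split: split_indicator simp: C'_def B'_def)
  qed
  then show ?thesis unfolding DD_def set_lebesgue_integral_def .
qed

lemma C_inf: "C_infinity_on (G \<theta>) {0<..1}"
  unfolding C_infinity_on_def
proof (intro exI[of _ "DD \<theta>"] conjI ballI allI)
  fix x :: real assume "x \<in> {0<..1}"
  then show "DD \<theta> 0 x = G \<theta> x"
    unfolding DD_def G_def kk_def pf_def by (simp add: rGamma_inverse_Gamma divide_inverse mult_ac)
next
  fix n and x :: real assume "x \<in> {0<..1}"
  then show "(DD \<theta> n has_real_derivative DD \<theta> (Suc n) x) (at x within {0<..1})"
    using DD_deriv[of x \<theta> n] by (auto intro: has_field_derivative_at_within)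
qed



lemma set_integral_pos0:
  fixes f :: "real \<Rightarrow> real"
  assumes int: "set_integrable lborel {0<..} f" and pos: "\<And>s. 0 < s \<Longrightarrow> 0 < f s"
  shows "0 < (LINT s:{0<..}|lborel. f s)"
proof -
  let ?g = "\<lambda>s. indicator {0<..} s *\<^sub>R f s"
  have ig: "integrable lborel ?g" using int unfolding set_integrable_def .
  have nn: "AE s in lborel. 0 \<le> ?g s" using pos by (auto intro!: AE_I2 less_imp_le split: split_indicator)
  have ge: "0 \<le> integral\<^sup>L lborel ?g" using nn by (rule integral_nonneg_AE)
  have ne: "integral\<^sup>L lborel ?g \<noteq> 0"
  proof
    assume "integral\<^sup>L lborel ?g = 0"
    then have "AE s in lborel. ?g s = 0" using integral_nonneg_eq_0_iff_AE[OF ig nn] by simp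
    moreover have "AE s in lborel. ?g s = 0 \<longrightarrow> s \<notin> {0<..1}"
    proof (intro AE_I2 impI)
      fix s assume "?g s = 0"
      then show "s \<notin> {0<..1}" using pos[of s] by (auto split: split_indicator)
    qed
    ultimately have "AE s in lborel. (s::real) \<notin> {0<..1}" by (rule AE_mp)
    then have "{0<..1::real} \<in> null_sets lborel"
      by (subst AE_iff_null_sets) auto
    then show False by (simp add: null_sets_def)
  qed
  show ?thesis using ge ne unfolding set_lebesgue_integral_def by simp
qed

lemma G_pos: "0 < t \<Longrightarrow> 0 < G \<theta> t"
proof -
  assume t: "0 < t"
  have "G \<theta> t = DD \<theta> 0 t"
    unfolding DD_def G_def kk_def pf_def by (simp add: rGamma_inverse_Gamma divide_inverse mult_ac)
  also have "0 < DD \<theta> 0 t" unfolding DD_def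
    by (rule set_integral_pos0[OF DD_integrable[OF t]]) (use t in \<open>auto simp: kk_def pf_def rGamma_pos\<close>)
  finally show ?thesis .
qed



definition phi :: "real \<Rightarrow> real \<Rightarrow> real" where
  "phi \<theta> s = exp ((\<theta> - euler_mascheroni) * s) * rGamma (s+1)"
definition phi1 :: "real \<Rightarrow> real \<Rightarrow> real" where
  "phi1 \<theta> s = phi \<theta> s * ((\<theta> - euler_mascheroni) - Digamma (s+1))"
definition phi2 :: "real \<Rightarrow> real \<Rightarrow> real" where
  "phi2 \<theta> s = phi \<theta> s * (((\<theta> - euler_mascheroni) - Digamma (s+1))^2 - Polygamma 1 (s+1))"

lemma notnp: "0 \<le> s \<Longrightarrow> (s + 1 :: real) \<notin> \<int>\<^sub>\<le>\<^sub>0"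
  by (auto dest: nonpos_Ints_nonpos)

lemma phi_deriv: "0 \<le> s \<Longrightarrow> (phi \<theta> has_real_derivative phi1 \<theta> s) (at s)"
  unfolding phi_def phi1_def
  by (rule derivative_eq_intros refl | use notnp in force)+ (simp add: algebra_simps)

lemma phi1_deriv: "0 \<le> s \<Longrightarrow> (phi1 \<theta> has_real_derivative phi2 \<theta> s) (at s)"
proof -
  assume s: "0 \<le> s"
  have dg: "((\<lambda>s. Digamma (s+1)) has_real_derivative Polygamma (Suc 0) (s+1) * (1+0)) (at s)"
    by (rule DERIV_chain2[OF has_field_derivative_Polygamma[OF notnp[OF s]] DERIV_add[OF DERIV_ident DERIV_const]])
  have "((\<lambda>s. phi \<theta> s * ((\<theta> - euler_mascheroni) - Digamma (s+1))) has_real_derivative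
     phi1 \<theta> s * ((\<theta> - euler_mascheroni) - Digamma (s+1)) + (0 - Polygamma 1 (s+1) * (1+0)) * phi \<theta> s) (at s)"
    by (rule DERIV_mult[OF phi_deriv[OF s] DERIV_diff[OF DERIV_const dg[unfolded One_nat_def[symmetric]]]])
  then show ?thesis unfolding phi1_def[abs_def] 
    by (simp add: phi2_def phi1_def power2_eq_square algebra_simps)
qed

lemma phi2_cont: "continuous_on {0..1} (phi2 \<theta>)"
  unfolding phi2_def phi_def
  by (intro continuous_at_imp_continuous_on ballI continuous_intros isCont_rGamma)
     (auto dest: nonpos_Ints_nonpos)

lemma phi_0: "phi \<theta> 0 = 1" by (simp add: phi_def)
lemma phi1_0: "phi1 \<theta> 0 = \<theta>" by (simp add: phi1_def phi_0)

lemma taylor_phi: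
  "\<exists>K B. 0 \<le> B \<and> (\<forall>s>0. \<bar>phi \<theta> s - 1 - \<theta> * s\<bar> \<le> K * s^2 * exp (B * s))"
proof -
  have "compact (phi2 \<theta> ` {0..1})" by (intro compact_continuous_image phi2_cont) auto
  then have "bounded (phi2 \<theta> ` {0..1})" by (rule compact_imp_bounded)
  then obtain K1 where "\<forall>x\<in>phi2 \<theta> ` {0..1}. norm x \<le> K1" unfolding bounded_iff by blast
  then have K1: "\<And>t. t \<in> {0..1} \<Longrightarrow> \<bar>phi2 \<theta> t\<bar> \<le> K1" by auto
  have K1pos: "0 \<le> K1" using K1[of 0] by auto
  define B where "B = \<bar>\<theta> - euler_mascheroni\<bar>"
  define K where "K = K1 / 2 + exp 2 + 1 + \<bar>\<theta>\<bar>"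
  show ?thesis
  proof (rule exI[of _ K], rule exI[of _ B], intro conjI allI impI)
    show "0 \<le> B" using K1pos by (simp add: B_def)
    fix s :: real assume s: "0 < s"
    have eB: "1 \<le> exp (B * s)" using s by (simp add: B_def)
    show "\<bar>phi \<theta> s - 1 - \<theta> * s\<bar> \<le> K * s^2 * exp (B * s)"
    proof (cases "s \<le> 1")
      case True
      define d where "d = (\<lambda>m::nat. if m = 0 then phi \<theta> else if m = 1 then phi1 \<theta> else phi2 \<theta>)"
      have "\<exists>t. 0 < t \<and> t < s \<and> phi \<theta> s = (\<Sum>m<2. d m 0 / fact m * s ^ m) + d 2 t / fact 2 * s ^ 2"
      proof (rule Maclaurin[OF s])
        show "d 0 = phi \<theta>" by (simp add: d_def)
        show "\<forall>m t. m < 2 \<and> 0 \<le> t \<and> t \<le> s \<longrightarrow> (d m has_real_derivative d (Suc m) t) (at t)"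
          by (auto simp: d_def less_2_cases_iff phi_deriv phi1_deriv)
      qed simp
      then obtain t where t: "0 < t" "t < s" and eq: "phi \<theta> s = 1 + \<theta> * s + phi2 \<theta> t / 2 * s^2"
        by (auto simp: d_def phi_0 phi1_0 numeral_2_eq_2)
      have "\<bar>phi \<theta> s - 1 - \<theta> * s\<bar> = \<bar>phi2 \<theta> t\<bar> / 2 * s^2" using eq by (simp add: abs_mult)
      also have "\<dots> \<le> K1 / 2 * s^2" using K1[of t] t True by (intro mult_right_mono) auto
      also have "\<dots> \<le> K * s^2" unfolding K_def by (intro mult_right_mono) auto
      also have "\<dots> \<le> K * s^2 * exp (B * s)"
      proof -
        have "0 \<le> K * s^2" using K1pos by (simp add: K_def)
        then have "K * s^2 * 1 \<le> K * s^2 * exp (B * s)" by (rule mult_left_mono[OF eB])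
        then show ?thesis by simp
      qed
      finally show ?thesis .
    next
      case False
      then have s1: "1 < s" by simp
      have r: "rGamma (s+1) \<le> exp 2" using rGamma_upper[of s 1] s by simp
      have "phi \<theta> s \<le> exp (B * s) * exp 2"
        unfolding phi_def using r rGamma_pos[of s] s
        by (intro mult_mono) (auto simp: B_def)
      moreover have "0 \<le> phi \<theta> s" unfolding phi_def using rGamma_pos[of s] s by simp
      ultimately have "\<bar>phi \<theta> s - 1 - \<theta> * s\<bar> \<le> exp 2 * exp (B * s) + 1 + \<bar>\<theta>\<bar> * s"
      proof -
        have ta: "\<bar>\<theta> * s\<bar> = \<bar>\<theta>\<bar> * s" using s by (simp add: abs_mult)
        have "- \<bar>\<theta> * s\<bar> \<le> \<theta> * s" "\<theta> * s \<le> \<bar>\<theta> * s\<bar>" by auto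
        then show ?thesis unfolding abs_le_iff using ta \<open>phi \<theta> s \<le> exp (B * s) * exp 2\<close> \<open>0 \<le> phi \<theta> s\<close>
          by (simp add: mult.commute)
      qed
      also have "\<dots> \<le> exp 2 * (s^2 * exp (B * s)) + s^2 * exp (B * s) + \<bar>\<theta>\<bar> * (s^2 * exp (B * s))"
      proof -
        have "1 \<le> s^2" using s1 by (simp add: one_le_power)
        have "s \<le> s^2" using s1 by (simp add: power2_eq_square)
        have a: "exp (B * s) \<le> s^2 * exp (B * s)" using \<open>1 \<le> s^2\<close> by simp
        have b: "1 \<le> s^2 * exp (B * s)" using \<open>1 \<le> s^2\<close> eB by (metis mult_mono' one_le_numeral order.trans zero_le_one mult_1)
        have c: "s \<le> s^2 * exp (B * s)" using \<open>s \<le> s^2\<close> eB s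
          by (metis mult_left_mono mult.right_neutral order_trans zero_le_power2)
        show ?thesis using a b c by (intro add_mono mult_left_mono) auto
      qed
      also have "\<dots> \<le> K * s^2 * exp (B * s)" using K1pos by (simp add: K_def algebra_simps)
      finally show ?thesis .
    qed
  qed
qed



lemma tpowr: "0 < t \<Longrightarrow> t * t powr (s - 1 - real 0) = exp (- (ln (1/t) * s))"
proof -
  assume t: "0 < t"
  have "t powr s = t powr (1 + (s - 1))" by simp
  also have "\<dots> = t powr 1 * t powr (s - 1)" by (rule powr_add)
  also have "\<dots> = t * t powr (s - 1 - real 0)" using t by simp
  finally have "t * t powr (s - 1 - real 0) = t powr s" by simp
  also have "\<dots> = exp (- (ln (1/t) * s))" using t by (simp add: powr_def ln_div mult.commute)
  finally show ?thesis .
qed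

lemma asym_t:
  assumes K: "0 \<le> K" and B: "0 \<le> B"
    and tay: "\<And>s. 0 < s \<Longrightarrow> \<bar>phi \<theta> s - 1 - \<theta> * s\<bar> \<le> K * s^2 * exp (B * s)"
    and t: "0 < t" and L: "2 * B + 1 \<le> ln (1/t)"
  shows "\<bar>t * (ln (1/t))\<^sup>2 * G \<theta> t - 1 - 2 * \<theta> / ln (1/t)\<bar> \<le> (96 * K) * \<bar>1 / (ln (1/t))\<^sup>2\<bar>"
proof -
  define L where "L = ln (1/t)"
  have L1: "2 * B + 1 \<le> L" using L by (simp add: L_def)
  have Lpos: "0 < L" using L1 B by simp
  have LB: "0 < L - B" using L1 B by simp
  have I: "set_integrable lborel {0<..} (\<lambda>s. kk \<theta> s * exp (-(L * s)))"
  proof (rule integrable_W[where C=1 and B="\<theta> - euler_mascheroni + 1"])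
    show "continuous_on {0<..} (\<lambda>s. kk \<theta> s * exp (-(L * s)))"
      unfolding kk_def by (intro continuous_intros continuous_at_imp_continuous_on ballI isCont_rGamma)
    fix s :: real assume s: "0 < s"
    have "\<bar>kk \<theta> s * exp (-(L * s))\<bar> = \<bar>kk \<theta> s\<bar> * exp (-(L * s))" by (simp add: abs_mult)
    also have "\<dots> \<le> \<bar>kk \<theta> s\<bar> * 1" using s Lpos by (intro mult_left_mono) auto
    also have "\<dots> \<le> 1 * exp ((\<theta> - euler_mascheroni + 1) * s) * rGamma (s+1)" using kk_bound[OF s] by simp
    finally show "\<bar>kk \<theta> s * exp (-(L * s))\<bar> \<le> 1 * exp ((\<theta> - euler_mascheroni + 1) * s) * rGamma (s+1)" .
  qed
  note I1 = laplace_set[OF Lpos, of 1] and I2 = laplace_set[OF Lpos, of 2] and I3 = laplace_set[OF LB, of 3]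
  have tG: "t * G \<theta> t = (LINT s:{0<..}|lborel. kk \<theta> s * exp (-(L * s)))"
  proof -
    have "G \<theta> t = DD \<theta> 0 t"
      unfolding DD_def G_def kk_def pf_def by (simp add: rGamma_inverse_Gamma divide_inverse mult_ac)
    have fe: "(\<lambda>s. t * (kk \<theta> s * pf 0 s * t powr (s - 1 - real 0))) = (\<lambda>s. kk \<theta> s * exp (-(L * s)))"
    proof
      fix s
      have "t * (kk \<theta> s * pf 0 s * t powr (s - 1 - real 0)) = kk \<theta> s * (t * t powr (s - 1 - real 0))"
        by (simp add: pf_def)
      also have "\<dots> = kk \<theta> s * exp (-(L * s))" unfolding tpowr[OF t] L_def ..
      finally show "t * (kk \<theta> s * pf 0 s * t powr (s - 1 - real 0)) = kk \<theta> s * exp (-(L * s))" .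
    qed
    have "t * G \<theta> t = (LINT s:{0<..}|lborel. t * (kk \<theta> s * pf 0 s * t powr (s - 1 - real 0)))"
      unfolding \<open>G \<theta> t = DD \<theta> 0 t\<close> DD_def by (rule set_integral_mult_right[symmetric])
    also have "\<dots> = (LINT s:{0<..}|lborel. kk \<theta> s * exp (-(L * s)))"
      unfolding fe ..
    finally show ?thesis .
  qed
  define R where "R s = kk \<theta> s * exp (-(L * s)) - s^1 * exp (-(L * s)) - \<theta> * (s^2 * exp (-(L * s)))" for s
  have IR: "set_integrable lborel {0<..} R" unfolding R_def
    using I I1(1) I2(1) by (intro set_integral_diff(1) set_integrable_mult_right) auto
  have Rval: "(LINT s:{0<..}|lborel. R s) = t * G \<theta> t - 1 / L^2 - \<theta> * (2 / L^3)"
  proof -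
    have "(LINT s:{0<..}|lborel. R s) = (LINT s:{0<..}|lborel. kk \<theta> s * exp (-(L * s))) - (LINT s:{0<..}|lborel. s^1 * exp (-(L * s)))
        - \<theta> * (LINT s:{0<..}|lborel. s^2 * exp (-(L * s)))"
      unfolding R_def using I I1(1) I2(1)
      by (subst set_integral_diff(2), (intro set_integral_diff(1) set_integrable_mult_right; auto)+,
          subst set_integral_diff(2)) auto
    also have "\<dots> = t * G \<theta> t - 1 / L^2 - \<theta> * (2 / L^3)"
      using I1(2) I2(2) tG by (simp add: numeral_2_eq_2 numeral_3_eq_3)
    finally show ?thesis .
  qed
  have pw: "\<bar>R s\<bar> \<le> K * (s^3 * exp (-((L-B) * s)))" if s: "0 < s" for s
  proof -
    have kp: "kk \<theta> s = s * phi \<theta> s" by (simp add: kk_def phi_def)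
    have "R s = s * (phi \<theta> s - 1 - \<theta> * s) * exp (-(L * s))"
      unfolding R_def kp by (simp add: algebra_simps power2_eq_square)
    then have "\<bar>R s\<bar> = s * \<bar>phi \<theta> s - 1 - \<theta> * s\<bar> * exp (-(L * s))" using s by (simp add: abs_mult)
    also have "\<dots> \<le> s * (K * s^2 * exp (B * s)) * exp (-(L * s))"
      using tay[OF s] s by (intro mult_right_mono mult_left_mono) auto
    also have "\<dots> = K * (s^3 * (exp (B * s) * exp (-(L * s))))" by (simp add: power3_eq_cube power2_eq_square mult_ac)
    also have "exp (B * s) * exp (-(L * s)) = exp (-((L-B) * s))" by (simp add: exp_add[symmetric] algebra_simps)
    finally show ?thesis .
  qed
  have I3K: "set_integrable lborel {0<..} (\<lambda>s. K * (s^3 * exp (-((L-B) * s))))"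
    using I3(1) by (intro set_integrable_mult_right) auto
  have up: "(LINT s:{0<..}|lborel. R s) \<le> (LINT s:{0<..}|lborel. K * (s^3 * exp (-((L-B) * s))))"
    by (rule set_integral_mono[OF IR I3K]) (use pw in \<open>auto simp: abs_le_iff\<close>)
  have lo: "(LINT s:{0<..}|lborel. - (K * (s^3 * exp (-((L-B) * s))))) \<le> (LINT s:{0<..}|lborel. R s)"
  proof (rule set_integral_mono[OF _ IR])
    show "set_integrable lborel {0<..} (\<lambda>s. - (K * (s^3 * exp (-((L-B) * s)))))"
      using I3K by (auto simp: set_integrable_def)
    fix s :: real assume "s \<in> {0<..}"
    then have "\<bar>R s\<bar> \<le> K * (s^3 * exp (-((L-B) * s)))" using pw by auto
    then show "- (K * (s^3 * exp (-((L-B) * s)))) \<le> R s" by linarith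
  qed
  have val3: "(LINT s:{0<..}|lborel. K * (s^3 * exp (-((L-B) * s)))) = K * (6 / (L-B)^4)"
    using I3(2) by (simp add: fact_numeral)
  have Rb: "\<bar>LINT s:{0<..}|lborel. R s\<bar> \<le> K * (6 / (L-B)^4)"
    using up lo val3 set_integral_uminus[OF I3K] by (simp add: abs_le_iff)
  have eq: "t * L\<^sup>2 * G \<theta> t - 1 - 2 * \<theta> / L = L^2 * (LINT s:{0<..}|lborel. R s)"
    using Lpos unfolding Rval by (simp add: field_simps power2_eq_square power3_eq_cube)
  have "\<bar>L^2 * (LINT s:{0<..}|lborel. R s)\<bar> \<le> L^2 * (K * (6 / (L-B)^4))"
    unfolding abs_mult abs_power2 using Rb by (intro mult_left_mono) auto
  also have "\<dots> \<le> L^2 * (K * (6 / (L/2)^4))"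
  proof -
    have "(L/2)^4 \<le> (L-B)^4" using L1 Lpos B by (intro power_mono) auto
    then have "6 / (L-B)^4 \<le> 6 / (L/2)^4" using Lpos LB by (intro divide_left_mono mult_pos_pos zero_less_power) auto
    then show ?thesis using K by (intro mult_left_mono) auto
  qed
  also have "\<dots> = (96 * K) * (1 / L^2)" using Lpos by (simp add: field_simps power2_eq_square power4_eq_xxxx)
  finally have "\<bar>t * L\<^sup>2 * G \<theta> t - 1 - 2 * \<theta> / L\<bar> \<le> (96 * K) * (1 / L^2)" unfolding eq .
  then show ?thesis by (simp add: L_def)
qed



theorem mainTheorem5:
  fixes \<theta> :: real
  shows "C_infinity_on (G \<theta>) {0<..1}
    \<and> (\<forall>t\<in>{0<..1}. G \<theta> t > 0)
    \<and> (\<lambda>t. t * (ln (1/t))\<^sup>2 * G \<theta> t - 1 - 2 * \<theta> / ln (1/t))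
        \<in> O[at_right 0](\<lambda>t. 1 / (ln (1/t))\<^sup>2)"
proof (intro conjI ballI)
  show "C_infinity_on (G \<theta>) {0<..1}" by (rule C_inf)
  show "0 < G \<theta> t" if "t \<in> {0<..1}" for t using that G_pos by auto
  obtain K B where B: "0 \<le> B" and tay0: "\<And>s. 0 < s \<Longrightarrow> \<bar>phi \<theta> s - 1 - \<theta> * s\<bar> \<le> K * s^2 * exp (B * s)"
    using taylor_phi[of \<theta>] by blast
  have tay: "\<bar>phi \<theta> s - 1 - \<theta> * s\<bar> \<le> \<bar>K\<bar> * s^2 * exp (B * s)" if "0 < s" for s
  proof -
    have "K * s^2 * exp (B * s) \<le> \<bar>K\<bar> * s^2 * exp (B * s)" by (intro mult_right_mono) auto
    then show ?thesis using tay0[OF that] by linarith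
  qed
  show "(\<lambda>t. t * (ln (1/t))\<^sup>2 * G \<theta> t - 1 - 2 * \<theta> / ln (1/t)) \<in> O[at_right 0](\<lambda>t. 1 / (ln (1/t))\<^sup>2)"
  proof (rule bigoI[where c="96 * \<bar>K\<bar>"])
    show "\<forall>\<^sub>F t in at_right 0. norm (t * (ln (1/t))\<^sup>2 * G \<theta> t - 1 - 2 * \<theta> / ln (1/t)) \<le> (96 * \<bar>K\<bar>) * norm (1 / (ln (1/t))\<^sup>2)"
      unfolding eventually_at_right_field
    proof (intro exI[of _ "exp (-(2 * B + 1))"] conjI allI impI)
      show "(0::real) < exp (-(2 * B + 1))" by simp
      fix t :: real assume t: "0 < t" "t < exp (-(2 * B + 1))"
      have "ln t < ln (exp (-(2 * B + 1)))" using t by (intro ln_less_cancel_iff[THEN iffD2]) auto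
      then have L: "2 * B + 1 \<le> ln (1/t)" using t by (simp add: ln_div)
      show "norm (t * (ln (1/t))\<^sup>2 * G \<theta> t - 1 - 2 * \<theta> / ln (1/t)) \<le> (96 * \<bar>K\<bar>) * norm (1 / (ln (1/t))\<^sup>2)"
        using asym_t[of "\<bar>K\<bar>" B \<theta> t, OF _ B tay t(1) L] unfolding real_norm_def by simp
    qed
  qed
qed


end
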